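(* Let $\kappa$ be a cardinal, $\mathbb{F}$ a field, and $V$ the vector space over $\mathbb{F}$ presented by generators $x_\alpha,y_\alpha,z_\alpha$ ($\alpha\in\kappa$) and relations $x_\alpha+y_\alpha+z_\alpha=0$. Let $F(A,B,C)=\mathrm{Span}\{x_\alpha:\alpha\in A\}+\mathrm{Span}\{y_\beta:\beta\in B\}+\mathrm{Span}\{z_\gamma:\gamma\in C\}$ for $A,B,C\subseteq\kappa$. If $(A,B,C)$ and $(A',B',C')$ are balanced triples of subsets of $\kappa$ (i.e. $A\cap B=A\cap C=B\cap C$ and $A'\cap B'=A'\cap C'=B'\cap C'$), then $F(A,B,C)\cap F(A',B',C')=F(A\cap A',\,B\cap B',\,C\cap C')$. *)

theory Defs
  imports Complex_Main "HOL-Library.Function_Algebras" "HOL-Library.Product_Plus"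
begin

text \<open>Concrete model of the presented space V: the vector space over the field 'f
  presented by generators x_a, y_a, z_a (a ranging over the index type 'k, playing the
  role of the cardinal kappa) with relations x_a + y_a + z_a = 0 is realised as the
  finitely supported functions 'k => 'f * 'f, with x_a = (1,0) at a, y_a = (0,1) at a,
  z_a = (-1,-1) at a.  We work in the ambient module of all functions 'k => 'f * 'f,
  which contains V as the span of the generators; spans are unaffected.\<close>

definition scaleV :: "'f::field \<Rightarrow> ('k \<Rightarrow> 'f \<times> 'f) \<Rightarrow> ('k \<Rightarrow> 'f \<times> 'f)" where
  "scaleV c v = (\<lambda>k. (c * fst (v k), c * snd (v k)))"

definition xv :: "'k \<Rightarrow> ('k \<Rightarrow> 'f::field \<times> 'f)" where
  "xv a = (\<lambda>k. if k = a then (1, 0) else (0, 0))"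

definition yv :: "'k \<Rightarrow> ('k \<Rightarrow> 'f::field \<times> 'f)" where
  "yv a = (\<lambda>k. if k = a then (0, 1) else (0, 0))"

definition zv :: "'k \<Rightarrow> ('k \<Rightarrow> 'f::field \<times> 'f)" where
  "zv a = (\<lambda>k. if k = a then (-1, -1) else (0, 0))"

lemma scaleV_module: "module (scaleV :: 'f::field \<Rightarrow> _ \<Rightarrow> ('k \<Rightarrow> 'f \<times> 'f))"
  by unfold_locales (auto simp: scaleV_def fun_eq_iff algebra_simps)

definition FF :: "'k set \<Rightarrow> 'k set \<Rightarrow> 'k set \<Rightarrow> ('k \<Rightarrow> 'f::field \<times> 'f) set" where
  "FF A B C = Modules.module.span scaleV (xv ` A \<union> yv ` B \<union> zv ` C)"

definition balanced :: "'k set \<Rightarrow> 'k set \<Rightarrow> 'k set \<Rightarrow> bool" where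
  "balanced A B C \<longleftrightarrow> A \<inter> B = A \<inter> C \<and> A \<inter> C = B \<inter> C"

lemma "xv a + yv a + zv a = (0 :: 'k \<Rightarrow> 'f::field \<times> 'f)"
  by (auto simp: xv_def yv_def zv_def fun_eq_iff zero_prod_def)

end

theory Submission
  imports Defs
begin

interpretation V: module "scaleV :: 'f::field \<Rightarrow> ('k \<Rightarrow> 'f \<times> 'f) \<Rightarrow> _"
  by (rule scaleV_module)

definition Pt :: "bool \<Rightarrow> bool \<Rightarrow> bool \<Rightarrow> ('f::field \<times> 'f) set" where
  "Pt a b c = {p. (a \<and> \<not>b \<and> \<not>c \<longrightarrow> snd p = 0) \<and> (\<not>a \<and> b \<and> \<not>c \<longrightarrow> fst p = 0)
     \<and> (\<not>a \<and> \<not>b \<and> c \<longrightarrow> fst p = snd p) \<and> (\<not>a \<and> \<not>b \<and> \<not>c \<longrightarrow> p = 0)}"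

definition Ch :: "'k set \<Rightarrow> 'k set \<Rightarrow> 'k set \<Rightarrow> ('k \<Rightarrow> 'f::field \<times> 'f) set" where
  "Ch A B C = {v. finite {k. v k \<noteq> 0} \<and> (\<forall>k. v k \<in> Pt (k \<in> A) (k \<in> B) (k \<in> C))}"

definition delta :: "'k \<Rightarrow> 'f::field \<times> 'f \<Rightarrow> ('k \<Rightarrow> 'f \<times> 'f)" where
  "delta k p = (\<lambda>j. if j = k then p else 0)"

lemma sum_app: "(\<Sum>k\<in>S. f k) j = (\<Sum>k\<in>S. f k j)"
  by (induction S rule: infinite_finite_induct) auto


lemma Ch_subspace: "V.subspace (Ch A B C :: ('k \<Rightarrow> 'f::field \<times> 'f) set)"
proof (rule V.subspaceI)
  show "0 \<in> Ch A B C" by (auto simp: Ch_def Pt_def zero_prod_def)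
next
  fix x y :: "'k \<Rightarrow> 'f \<times> 'f" assume x: "x \<in> Ch A B C" and y: "y \<in> Ch A B C"
  have "{k. (x + y) k \<noteq> 0} \<subseteq> {k. x k \<noteq> 0} \<union> {k. y k \<noteq> 0}" by auto
  then have "finite {k. (x + y) k \<noteq> 0}" using x y by (auto simp: Ch_def intro: finite_subset)
  moreover have "(x + y) k \<in> Pt (k \<in> A) (k \<in> B) (k \<in> C)" for k
  proof -
    have hx: "x k \<in> Pt (k \<in> A) (k \<in> B) (k \<in> C)" using x by (auto simp: Ch_def)
    have hy: "y k \<in> Pt (k \<in> A) (k \<in> B) (k \<in> C)" using y by (auto simp: Ch_def)
    show ?thesis using hx hy unfolding Pt_def
      by (cases "x k"; cases "y k") (auto simp: zero_prod_def)
  qed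
  ultimately show "x + y \<in> Ch A B C" by (auto simp: Ch_def)
next
  fix c and x :: "'k \<Rightarrow> 'f \<times> 'f" assume x: "x \<in> Ch A B C"
  have "{k. scaleV c x k \<noteq> 0} \<subseteq> {k. x k \<noteq> 0}" by (auto simp: scaleV_def zero_prod_def)
  then have "finite {k. scaleV c x k \<noteq> 0}" using x by (auto simp: Ch_def intro: finite_subset)
  moreover have "scaleV c x k \<in> Pt (k \<in> A) (k \<in> B) (k \<in> C)" for k
    using x unfolding Ch_def Pt_def scaleV_def
    by (cases "x k") (auto simp: zero_prod_def)
  ultimately show "scaleV c x \<in> Ch A B C" by (auto simp: Ch_def)
qed

lemma FF_sub_Ch: "(FF A B C :: ('k \<Rightarrow> 'f::field \<times> 'f) set) \<subseteq> Ch A B C"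
  unfolding FF_def
proof (rule V.span_minimal[OF _ Ch_subspace])
  have fin: "finite {k. (if k = a then p else (0::'f\<times>'f)) \<noteq> 0}" for a and p
    by (rule finite_subset[of _ "{a}"]) auto
  show "xv ` A \<union> yv ` B \<union> zv ` C \<subseteq> Ch A B C"
    unfolding Ch_def
    by (auto simp: xv_def yv_def zv_def fin Pt_def zero_prod_def)
qed

lemma delta_span:
  assumes "(p::'f::field \<times> 'f) \<in> Pt (k \<in> A) (k \<in> B) (k \<in> C)"
  shows "delta k p \<in> FF A B C"
proof -
  obtain a b where p: "p = (a, b)" by (cases p)
  have X: "scaleV c (xv k) = delta k (c, 0)" for c :: 'f
    by (auto simp: scaleV_def xv_def delta_def fun_eq_iff zero_prod_def)
  have Y: "scaleV c (yv k) = delta k (0, c)" for c :: 'f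
    by (auto simp: scaleV_def yv_def delta_def fun_eq_iff zero_prod_def)
  have Z: "scaleV c (zv k) = delta k (-c, -c)" for c :: 'f
    by (auto simp: scaleV_def zv_def delta_def fun_eq_iff zero_prod_def)
  have D: "delta k p + delta k q = delta k (p + q)" for p q
    by (auto simp: delta_def fun_eq_iff)
  have x: "delta k (c, 0) \<in> FF A B C" if "k \<in> A" for c :: 'f
  proof -
    have "scaleV c (xv k) \<in> V.span (xv ` A \<union> yv ` B \<union> zv ` C)"
      by (rule V.span_scale, rule V.span_base) (use that in auto)
    then show ?thesis unfolding FF_def X .
  qed
  have y: "delta k (0, c) \<in> FF A B C" if "k \<in> B" for c :: 'f
  proof -
    have "scaleV c (yv k) \<in> V.span (xv ` A \<union> yv ` B \<union> zv ` C)"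
      by (rule V.span_scale, rule V.span_base) (use that in auto)
    then show ?thesis unfolding FF_def Y .
  qed
  have z: "delta k (-c, -c) \<in> FF A B C" if "k \<in> C" for c :: 'f
  proof -
    have "scaleV c (zv k) \<in> V.span (xv ` A \<union> yv ` B \<union> zv ` C)"
      by (rule V.span_scale, rule V.span_base) (use that in auto)
    then show ?thesis unfolding FF_def Z .
  qed
  have add: "delta k q + delta k r \<in> FF A B C" if "delta k q \<in> FF A B C" "delta k r \<in> FF A B C" for q r
    using that unfolding FF_def by (rule V.span_add)
  show ?thesis
  proof (cases "k \<in> A \<and> k \<in> B")
    case True
    have "delta k (a, 0) + delta k (0, b) \<in> FF A B C" using True by (intro add x y) auto
    then show ?thesis by (simp add: D p)
  next
    case nAB: False
    show ?thesis
    proof (cases "k \<in> A \<and> k \<in> C")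
      case True
      have "delta k (a - b, 0) + delta k (-(-b), -(-b)) \<in> FF A B C" using True by (intro add x z) auto
      then show ?thesis by (simp add: D p)
    next
      case nAC: False
      show ?thesis
      proof (cases "k \<in> B \<and> k \<in> C")
        case True
        have "delta k (0, b - a) + delta k (-(-a), -(-a)) \<in> FF A B C" using True by (intro add y z) auto
        then show ?thesis by (simp add: D p)
      next
        case False
        then consider "k \<in> A" "k \<notin> B" "k \<notin> C" | "k \<notin> A" "k \<in> B" "k \<notin> C"
          | "k \<notin> A" "k \<notin> B" "k \<in> C" | "k \<notin> A" "k \<notin> B" "k \<notin> C"
          using nAB nAC by blast
        then show ?thesis
        proof cases
          case 1 then show ?thesis using assms x[of a] by (auto simp: p Pt_def)
        next
          case 2 then show ?thesis using assms y[of b] by (auto simp: p Pt_def)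
        next
          case 3 then show ?thesis using assms z[of "-a"] by (auto simp: p Pt_def)
        next
          case 4
          have "delta k p = 0" using assms 4 by (auto simp: Pt_def delta_def fun_eq_iff)
          then show ?thesis unfolding FF_def using V.span_zero by simp
        qed
      qed
    qed
  qed
qed

lemma Ch_sub_FF: "(Ch A B C :: ('k \<Rightarrow> 'f::field \<times> 'f) set) \<subseteq> FF A B C"
proof
  fix v assume v: "v \<in> Ch A B C"
  let ?S = "{k. v k \<noteq> 0}"
  have "v = (\<Sum>k\<in>?S. delta k (v k))"
  proof
    fix j
    show "v j = (\<Sum>k\<in>?S. delta k (v k)) j"
      unfolding sum_app delta_def
      using v by (cases "v j = 0") (auto simp: Ch_def sum.delta)
  qed
  moreover have "(\<Sum>k\<in>?S. delta k (v k)) \<in> FF A B C"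
    unfolding FF_def
    by (rule V.span_sum, fold FF_def, rule delta_span) (use v in \<open>auto simp: Ch_def\<close>)
  ultimately show "v \<in> FF A B C" by simp
qed

lemma FF_Ch: "(FF A B C :: ('k \<Rightarrow> 'f::field \<times> 'f) set) = Ch A B C"
  using FF_sub_Ch Ch_sub_FF by blast

lemma Pt_int:
  assumes "(a \<and> b \<longleftrightarrow> a \<and> c)" "(a \<and> c \<longleftrightarrow> b \<and> c)"
    "(a' \<and> b' \<longleftrightarrow> a' \<and> c')" "(a' \<and> c' \<longleftrightarrow> b' \<and> c')"
  shows "Pt a b c \<inter> Pt a' b' c' = (Pt (a \<and> a') (b \<and> b') (c \<and> c') :: ('f::field \<times> 'f) set)"
  using assms unfolding Pt_def set_eq_iff
  by (cases a; cases b; cases c; cases a'; cases b'; cases c') (auto simp: prod_eq_iff)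

theorem lemma6p3:
  fixes A B C A' B' C' :: "'k set"
  assumes "balanced A B C" and "balanced A' B' C'"
  shows "(FF A B C :: ('k \<Rightarrow> 'f::field \<times> 'f) set) \<inter> FF A' B' C'
           = FF (A \<inter> A') (B \<inter> B') (C \<inter> C')"
proof -
  have pw: "Pt (k \<in> A) (k \<in> B) (k \<in> C) \<inter> Pt (k \<in> A') (k \<in> B') (k \<in> C')
      = (Pt (k \<in> A \<inter> A') (k \<in> B \<inter> B') (k \<in> C \<inter> C') :: ('f \<times> 'f) set)" for k
  proof -
    have "(k \<in> A \<and> k \<in> B \<longleftrightarrow> k \<in> A \<and> k \<in> C)" "(k \<in> A \<and> k \<in> C \<longleftrightarrow> k \<in> B \<and> k \<in> C)"
      "(k \<in> A' \<and> k \<in> B' \<longleftrightarrow> k \<in> A' \<and> k \<in> C')" "(k \<in> A' \<and> k \<in> C' \<longleftrightarrow> k \<in> B' \<and> k \<in> C')"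
      using assms unfolding balanced_def by blast+
    then show ?thesis using Pt_int by simp
  qed
  show ?thesis unfolding FF_Ch
  proof (intro equalityI subsetI)
    fix v assume "v \<in> (Ch A B C :: ('k \<Rightarrow> 'f \<times> 'f) set) \<inter> Ch A' B' C'"
    then show "v \<in> Ch (A \<inter> A') (B \<inter> B') (C \<inter> C')"
      using pw unfolding Ch_def by blast
  next
    fix v assume "v \<in> (Ch (A \<inter> A') (B \<inter> B') (C \<inter> C') :: ('k \<Rightarrow> 'f \<times> 'f) set)"
    then show "v \<in> Ch A B C \<inter> Ch A' B' C'"
      using pw unfolding Ch_def by blast
  qed
qed

end
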